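(* Let $(\varGamma,C)$ be a split-step SUSYQW with coin $C(x)=C(\mathrm R)$ for $x\ge1$ and $C(x)=C(\mathrm L)$ for $x\le0$, where $C(\mathrm L),C(\mathrm R)$ are nontrivial and $b(\mathrm L)\ne0\ne b(\mathrm R)$ (Type III). Let $\Phi_\pm:\mathbb Z\to\mathbb C^2$ satisfy $\Phi_\pm(x+1)=A_\pm(x)\Phi_\pm(x)$ for all $x\in\mathbb Z$, and put $(k_{\pm,1},k_{\pm,2})^{\mathrm T}:=P_\pm(\mathrm L)^{-1}\Phi_\pm(0)$. Then $\sum_{x\in\mathbb Z}\|\Phi_\pm(x)\|^2<\infty$ if and only if for each $j=1,2$, \[ |k_{\pm,j}|^2\sum_{x\in\mathbb N}\Big(|z_{\pm,j}(\mathrm L)|^{-2x}+|z_{\pm,j}(\mathrm R)|^{2x}\Big)<\infty. \] Moreover: $|z_{+,1}(\mathrm L)|^{-1}<1$ and $|z_{+,1}(\mathrm R)|<1$ iff $a(\mathrm L)<-p<a(\mathrm R)$; $|z_{+,2}(\mathrm L)|^{-1}<1$ and $|z_{+,2}(\mathrm R)|<1$ iff $a(\mathrm R)<p<a(\mathrm L)$; $|z_{-,1}(\mathrm L)|^{-1}<1$ and $|z_{-,1}(\mathrm R)|<1$ iff $a(\mathrm R)<-p<a(\mathrm L)$; $|z_{-,2}(\mathrm L)|^{-1}<1$ and $|z_{-,2}(\mathrm R)|<1$ iff $a(\mathrm L)<p<a(\mathrm R)$. Finally, $\dim\ker Q_{\epsilon_\pm}\le1$.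
   Context: Let $L$ be the left shift $(L\Psi)(x)=\Psi(x+1)$ on $\ell^2(\mathbb Z)$. A split-step SUSYQW is $\varGamma=\begin{pmatrix} p & qL\\ \overline{q}L^* & -p\end{pmatrix}$, $C=\begin{pmatrix} a_1 & \overline{b}\\ b & a_2\end{pmatrix}$ on $\ell^2(\mathbb Z)\oplus\ell^2(\mathbb Z)$ with $p\in\mathbb R$, $q\in\mathbb C\setminus\{0\}$, $p^2+|q|^2=1$, $\theta=\operatorname{Arg}q$, real sequences $a_1,a_2$ and complex sequence $b$ with $a_j(x)^2+|b(x)|^2=1$, $b(x)(a_1(x)+a_2(x))=0$. $C(x)=\begin{pmatrix} a_1(x)&\overline{b(x)}\\ b(x)&a_2(x)\end{pmatrix}$; a nontrivial (i.e. $\ne\pm I$) limit $C(\sharp)$ has $a_1(\sharp)=-a_2(\sharp)=:a(\sharp)$, $a(\sharp)^2+|b(\sharp)|^2=1$. Define $\alpha_\pm(x)=(1\pm p)e^{i\theta}b(x)$, $\beta(x)=|q|(a_2(x+1)-a_1(x))$, and $A_\pm(x)=\begin{pmatrix}\mp\beta(x)/\alpha_\pm(x+1)&\overline{\alpha_\mp(x)}/\alpha_\pm(x+1)\\1&0\end{pmatrix}$. For $\sharp\in\{\mathrm L,\mathrm R\}$: $z_{\pm,j}(\sharp)=\frac{\overline q}{1\pm p}\cdot\frac{(-1)^j\pm a(\sharp)}{b(\sharp)}$ ($j=1,2$) and $P_\pm(\sharp)=\begin{pmatrix}z_{\pm,1}(\sharp)&z_{\pm,2}(\sharp)\\1&1\end{pmatrix}$.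 $Q_{\epsilon_\pm}$ are the operators on $\ell^2(\mathbb Z)$ given by $-2iQ_{\epsilon_\pm}=(1\pm p)e^{i\theta}Lb-(1\mp p)e^{-i\theta}\overline{b}L^*\pm|q|(a_2(\cdot+1)-a_1)$. $\mathbb N=\{1,2,\dots\}$; an open interval $(s,t)$ with $s\ge t$ is empty. *)

theory Defs
  imports "HOL-Analysis.Analysis" "HOL-Library.Function_Algebras"
begin

text \<open>Signs: the sign parameter s :: real is +1 for the subscript + and -1 for the subscript -.\<close>

definition mat2 :: "'a \<Rightarrow> 'a \<Rightarrow> 'a \<Rightarrow> 'a \<Rightarrow> 'a^2^2" where
  "mat2 a11 a12 a21 a22 = (\<chi> i j. if i = 1 then (if j = 1 then a11 else a12)
                                      else (if j = 1 then a21 else a22))"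

definition alpha :: "real \<Rightarrow> real \<Rightarrow> complex \<Rightarrow> (int \<Rightarrow> complex) \<Rightarrow> int \<Rightarrow> complex" where
  "alpha s p q b x = complex_of_real (1 + s * p) * exp (\<i> * complex_of_real (Arg q)) * b x"

definition beta :: "complex \<Rightarrow> (int \<Rightarrow> real) \<Rightarrow> (int \<Rightarrow> real) \<Rightarrow> int \<Rightarrow> real" where
  "beta q a1 a2 x = cmod q * (a2 (x + 1) - a1 x)"

definition Amat :: "real \<Rightarrow> real \<Rightarrow> complex \<Rightarrow> (int \<Rightarrow> real) \<Rightarrow> (int \<Rightarrow> real)
                     \<Rightarrow> (int \<Rightarrow> complex) \<Rightarrow> int \<Rightarrow> complex^2^2" where
  "Amat s p q a1 a2 b x =
     mat2 (- complex_of_real (s * beta q a1 a2 x) / alpha s p q b (x + 1))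
          (cnj (alpha (- s) p q b x) / alpha s p q b (x + 1))
          1 0"

definition zval :: "real \<Rightarrow> nat \<Rightarrow> real \<Rightarrow> complex \<Rightarrow> real \<Rightarrow> complex \<Rightarrow> complex" where
  "zval s j p q a b = cnj q / complex_of_real (1 + s * p)
                        * complex_of_real ((-1) ^ j + s * a) / b"

definition Pmat :: "real \<Rightarrow> real \<Rightarrow> complex \<Rightarrow> real \<Rightarrow> complex \<Rightarrow> complex^2^2" where
  "Pmat s p q a b = mat2 (zval s 1 p q a b) (zval s 2 p q a b) 1 1"

definition Qop :: "real \<Rightarrow> real \<Rightarrow> complex \<Rightarrow> (int \<Rightarrow> real) \<Rightarrow> (int \<Rightarrow> real)
                    \<Rightarrow> (int \<Rightarrow> complex) \<Rightarrow> (int \<Rightarrow> complex) \<Rightarrow> int \<Rightarrow> complex" where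
  "Qop s p q a1 a2 b \<psi> x =
     (complex_of_real (1 + s * p) * exp (\<i> * complex_of_real (Arg q)) * b (x + 1) * \<psi> (x + 1)
      - complex_of_real (1 - s * p) * exp (- \<i> * complex_of_real (Arg q)) * cnj (b x) * \<psi> (x - 1)
      + complex_of_real (s * cmod q * (a2 (x + 1) - a1 x)) * \<psi> x) / (- 2 * \<i>)"

definition l2Z :: "(int \<Rightarrow> complex) set" where
  "l2Z = {\<psi>. (\<lambda>x. (cmod (\<psi> x))\<^sup>2) summable_on UNIV}"

definition kerQ :: "real \<Rightarrow> real \<Rightarrow> complex \<Rightarrow> (int \<Rightarrow> real) \<Rightarrow> (int \<Rightarrow> real)
                    \<Rightarrow> (int \<Rightarrow> complex) \<Rightarrow> (int \<Rightarrow> complex) set" where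
  "kerQ s p q a1 a2 b = {\<psi> \<in> l2Z. Qop s p q a1 a2 b \<psi> = 0}"

definition cscale :: "complex \<Rightarrow> (int \<Rightarrow> complex) \<Rightarrow> (int \<Rightarrow> complex)" where
  "cscale c f = (\<lambda>x. c * f x)"

text \<open>Complex dimension of V is at most 1: every C-linearly independent subset of V
  is finite with at most one element (valid for any dimension, finite or not).\<close>
definition cdim_le_1 :: "(int \<Rightarrow> complex) set \<Rightarrow> bool" where
  "cdim_le_1 V = (\<forall>B \<subseteq> V. \<not> module.dependent cscale B \<longrightarrow> finite B \<and> card B \<le> 1)"

end

theory Submission
  imports Defs
begin

lemma mat2_mult1: "(mat2 a b c d *v v) $ 1 = a * v$1 + b * v$2"
  by (simp add: mat2_def matrix_vector_mult_def sum_2)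
lemma mat2_mult2: "(mat2 a b c d *v v) $ 2 = c * v$1 + d * v$2"
  by (simp add: mat2_def matrix_vector_mult_def sum_2)
lemma mat2_nth: "mat2 a b c d $ 1 $ 1 = a" "mat2 a b c d $ 1 $ 2 = b" "mat2 a b c d $ 2 $ 1 = c" "mat2 a b c d $ 2 $ 2 = d"
  by (simp_all add: mat2_def)
lemma vec2_eq: "(v::'a^2) = w \<longleftrightarrow> v$1 = w$1 \<and> v$2 = w$2"
  by (auto simp: vec_eq_iff forall_2)
lemma norm2_sq: "(norm (v::complex^2))\<^sup>2 = (cmod (v$1))\<^sup>2 + (cmod (v$2))\<^sup>2"
  by (simp add: norm_vec_def L2_set_def sum_2)
lemma matrix_inv_right': "invertible A \<Longrightarrow> A ** matrix_inv A = mat 1"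
  unfolding invertible_def matrix_inv_def by (rule someI_ex[THEN conjunct1])

lemma exp_i_facts: fixes t :: real
  shows "exp (\<i> * of_real t) \<noteq> 0" "cnj (exp (\<i> * of_real t)) * exp (\<i> * of_real t) = 1"
    "cnj (exp (\<i> * of_real t)) = exp (- \<i> * of_real t)"
proof -
  show "exp (\<i> * of_real t) \<noteq> 0" by simp
  show "cnj (exp (\<i> * of_real t)) = exp (- \<i> * of_real t)" by (simp add: exp_cnj)
  then show "cnj (exp (\<i> * of_real t)) * exp (\<i> * of_real t) = 1" by (simp add: exp_add[symmetric])
qed

lemma q_polar: "q = of_real (cmod q) * exp (\<i> * of_real (Arg q))"
  by (metis cis_conv_exp rcis_cmod_Arg rcis_def)

lemma eig_gen:
  fixes s p aC aN :: real and q bC bN :: complex and j :: nat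
  assumes s: "s * s = 1" and hpq: "p\<^sup>2 + (cmod q)\<^sup>2 = 1" and hp: "1 + s * p \<noteq> 0"
    and hC: "aC\<^sup>2 + (cmod bC)\<^sup>2 = 1" and bC: "bC \<noteq> 0" and bN: "bN \<noteq> 0"
  shows "- of_real (s * (cmod q * (-aN - aC))) / (of_real (1 + s * p) * exp (\<i> * of_real (Arg q)) * bN) * zval s j p q aC bC
       + cnj (of_real (1 + (-s) * p) * exp (\<i> * of_real (Arg q)) * bC) / (of_real (1 + s * p) * exp (\<i> * of_real (Arg q)) * bN)
       = zval s j p q aC bC * zval s j p q aN bN"
proof -
  define e where "e = exp (\<i> * of_real (Arg q))"
  define E where "E = cnj e"
  define Q where "Q = complex_of_real (cmod q)"
  define c where "c = complex_of_real ((-1)^j)"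
  define S where "S = complex_of_real s"
  define P where "P = complex_of_real p"
  define A where "A = complex_of_real aC"
  define A' where "A' = complex_of_real aN"
  have e0: "e \<noteq> 0" unfolding e_def by simp
  have Ee: "E * e = 1" unfolding E_def e_def using exp_i_facts(2) by blast
  have cq: "cnj q = Q * E" unfolding Q_def E_def e_def by (subst q_polar) simp
  have cc: "c * c = 1" unfolding c_def by (simp flip: of_real_mult power_mult_distrib)
  have SS: "S * S = 1" unfolding S_def using s by (metis of_real_1 of_real_mult)
  have QQ: "Q * Q = 1 - P * P" unfolding Q_def P_def using hpq
    by (metis (mono_tags, lifting) add_diff_cancel_left' of_real_1 of_real_diff of_real_mult power2_eq_square)
  have BB: "bC * cnj bC = 1 - A * A" unfolding A_def using hC
    by (metis add_diff_cancel_left' complex_norm_square of_real_1 of_real_diff of_real_mult power2_eq_square)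
  have hp': "1 + S * P \<noteq> 0" unfolding S_def P_def using hp
    by (metis of_real_1 of_real_add of_real_eq_0_iff of_real_mult)
  have z: "\<And>a b. zval s j p q a b = Q * E / (1 + S * P) * (c + S * of_real a) / b"
    unfolding zval_def cq c_def S_def P_def by simp
  define D where "D = 1 + S * P"
  define Z where "Z = Q * E / D * (c + S * A) / bC"
  define ZN where "ZN = Q * E / D * (c + S * A') / bN"
  have cP: "cnj P = P" "cnj S = S" "cnj A = A" unfolding P_def S_def A_def by simp_all
  have lhs: "- of_real (s * (cmod q * (-aN - aC))) / (of_real (1 + s * p) * exp (\<i> * of_real (Arg q)) * bN) * zval s j p q aC bC
       + cnj (of_real (1 + (-s) * p) * exp (\<i> * of_real (Arg q)) * bC) / (of_real (1 + s * p) * exp (\<i> * of_real (Arg q)) * bN)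
     = (S * Q * (A' + A) * Z + (1 - S * P) * E * cnj bC) / (D * e * bN)"
  proof -
    have t1: "- of_real (s * (cmod q * (-aN - aC))) = S * Q * (A' + A)"
      unfolding S_def Q_def A_def A'_def by (simp add: algebra_simps)
    have t2: "cnj (of_real (1 + (-s) * p) * exp (\<i> * of_real (Arg q)) * bC) = (1 - S * P) * E * cnj bC"
      unfolding S_def P_def E_def e_def by simp
    have t3: "of_real (1 + s * p) * exp (\<i> * of_real (Arg q)) * bN = D * e * bN"
      unfolding S_def P_def D_def e_def by simp
    have t4: "zval s j p q aC bC = Z" unfolding z Z_def D_def A_def by simp
    show ?thesis unfolding t1 t2 t3 t4 by (simp add: add_divide_distrib)
  qed
  have key: "Z * Q * (c - S * A) = (1 - S * P) * E * cnj bC"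
  proof -
    have "Z * Q * (c - S * A) = Q * Q * E * ((c + S * A) * (c - S * A)) / (D * bC)"
      unfolding Z_def by (simp add: field_simps)
    also have "(c + S * A) * (c - S * A) = bC * cnj bC"
      unfolding BB using cc SS by (simp add: algebra_simps)
    also have "Q * Q * E * (bC * cnj bC) / (D * bC) = Q * Q * E * cnj bC / D"
      using bC by (simp add: field_simps)
    also have "Q * Q = (1 - S * P) * D"
      unfolding QQ D_def using SS by (simp add: algebra_simps)
    also have "(1 - S * P) * D * E * cnj bC / D = (1 - S * P) * E * cnj bC"
      using hp' unfolding D_def by simp
    finally show ?thesis .
  qed
  have rhs: "Z * ZN * (D * e * bN) = Z * Q * (c + S * A')"
  proof -
    have "ZN * (D * e * bN) = Q * (E * e) * (c + S * A')"
    proof -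
      have hD: "D \<noteq> 0" using hp' unfolding D_def .
      have "ZN * (D * e * bN) = Q * E * (c + S * A') * e * (D * bN / (D * bN))"
        unfolding ZN_def by (simp add: field_simps)
      also have "D * bN / (D * bN) = 1" using hD bN by simp
      finally show ?thesis by (simp add: algebra_simps)
    qed
    then show ?thesis using Ee by (metis mult.assoc mult_1_right)
  qed
  have "S * Q * (A' + A) * Z + (1 - S * P) * E * cnj bC = Z * Q * (c + S * A')"
    using key by (simp add: algebra_simps)
  then have "S * Q * (A' + A) * Z + (1 - S * P) * E * cnj bC = Z * ZN * (D * e * bN)"
    using rhs by (metis mult.assoc)
  moreover have "D * e * bN \<noteq> 0" using hp' e0 bN unfolding D_def by simp
  ultimately have "(S * Q * (A' + A) * Z + (1 - S * P) * E * cnj bC) / (D * e * bN) = Z * ZN"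
    by simp
  moreover have "zval s j p q aC bC = Z" "zval s j p q aN bN = ZN"
    unfolding z Z_def ZN_def D_def A_def A'_def by simp_all
  ultimately show ?thesis using lhs by simp
qed

lemma zval_mul: assumes "1 + s * p \<noteq> 0" "b \<noteq> 0"
  shows "zval s j p q a b * (complex_of_real (1 + s * p) * b) = cnj q * complex_of_real ((-1)^j + s * a)"
proof -
  have d: "complex_of_real (1 + s * p) \<noteq> 0" using assms(1) by (metis of_real_eq_0_iff)
  define D where "D = complex_of_real (1 + s * p)"
  define X where "X = complex_of_real ((-1)^j + s * a)"
  have "zval s j p q a b = cnj q / D * X / b" unfolding zval_def D_def X_def ..
  then show ?thesis using d assms(2) unfolding D_def[symmetric] X_def[symmetric] by simp
qed

lemma zval_diff: assumes "q \<noteq> 0" "1 + s * p \<noteq> 0" "b \<noteq> 0"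
  shows "zval s 1 p q a b \<noteq> zval s 2 p q a b"
proof
  assume "zval s 1 p q a b = zval s 2 p q a b"
  then have "cnj q * complex_of_real ((-1)^1 + s * a) = cnj q * complex_of_real ((-1)^2 + s * a)"
    using zval_mul[OF assms(2,3), of 1 q a] zval_mul[OF assms(2,3), of 2 q a] by metis
  then have "complex_of_real ((-1)^1 + s * a) = complex_of_real ((-1)^2 + s * a)" using assms(1) by simp
  then show False by (simp only: of_real_eq_iff) simp
qed

lemma zval_nz: assumes "q \<noteq> 0" "1 + s * p \<noteq> 0" "b \<noteq> 0" "s = 1 \<or> s = -1" "a\<^sup>2 < 1"
  shows "zval s j p q a b \<noteq> 0"
proof -
  have "\<bar>a\<bar> < 1" using assms(5) by (simp add: abs_square_less_1)
  then have "(-1::real)^j + s * a \<noteq> 0" using assms(4)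
    by (cases "even j") auto
  then show ?thesis using assms unfolding zval_def by (simp del: of_real_add of_real_mult of_real_power)
qed

locale sq =
  fixes p :: real and q :: complex and aL aR :: real and bL bR :: complex
    and a1 a2 :: "int \<Rightarrow> real" and b :: "int \<Rightarrow> complex" and s :: real
  assumes hq: "q \<noteq> 0" and hpq: "p\<^sup>2 + (cmod q)\<^sup>2 = 1"
    and hL: "aL\<^sup>2 + (cmod bL)\<^sup>2 = 1" and hR: "aR\<^sup>2 + (cmod bR)\<^sup>2 = 1"
    and hbL: "bL \<noteq> 0" and hbR: "bR \<noteq> 0"
    and coinR: "\<And>x. x \<ge> 1 \<Longrightarrow> a1 x = aR \<and> a2 x = - aR \<and> b x = bR"
    and coinL: "\<And>x. x \<le> 0 \<Longrightarrow> a1 x = aL \<and> a2 x = - aL \<and> b x = bL"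
    and hs: "s = 1 \<or> s = -1"
begin

definition "zL j = zval s j p q aL bL"
definition "zR j = zval s j p q aR bR"
definition "m11 x = - complex_of_real (s * beta q a1 a2 x) / alpha s p q b (x + 1)"
definition "m12 x = cnj (alpha (- s) p q b x) / alpha s p q b (x + 1)"

lemma ss: "s * s = 1" using hs by auto

lemma p_lt: "p\<^sup>2 < 1"
  using hpq hq by (smt (verit) zero_less_norm_iff zero_less_power)

lemma sp_pos: "1 + s * p > 0" "1 - s * p > 0" "1 + (-s) * p > 0"
proof -
  have "\<bar>p\<bar> < 1" using p_lt by (simp add: abs_square_less_1)
  then show "1 + s * p > 0" "1 - s * p > 0" "1 + (-s) * p > 0" using hs by auto
qed

lemma aLR_lt: "aL\<^sup>2 < 1" "aR\<^sup>2 < 1"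
  using hL hbL hR hbR by (smt (verit) zero_less_norm_iff zero_less_power)+

lemma b_nz: "b x \<noteq> 0"
  using coinL[of x] coinR[of x] hbL hbR by (cases "x \<le> 0") auto

lemma alpha_nz: "alpha s p q b x \<noteq> 0" "alpha (-s) p q b x \<noteq> 0"
  unfolding alpha_def using sp_pos b_nz by (auto simp del: of_real_add of_real_mult)

lemma m12_nz: "m12 x \<noteq> 0"
  unfolding m12_def using alpha_nz by simp

lemma Amat_eq: "Amat s p q a1 a2 b x = mat2 (m11 x) (m12 x) 1 0"
  unfolding Amat_def m11_def m12_def ..

lemma zL_nz: "zL j \<noteq> 0" and zR_nz: "zR j \<noteq> 0"
  unfolding zL_def zR_def using zval_nz hq sp_pos hbL hbR hs aLR_lt by (metis less_numeral_extra(3))+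

lemma zL_diff: "zL 1 \<noteq> zL 2" and zR_diff: "zR 1 \<noteq> zR 2"
  unfolding zL_def zR_def using zval_diff hq sp_pos hbL hbR by (metis less_numeral_extra(3))+

lemma eig_L: assumes "x \<le> -1" shows "m11 x * zL j + m12 x = zL j * zL j"
proof -
  have c: "a1 x = aL" "a2 (x+1) = - aL" "b (x+1) = bL" "b x = bL" using coinL assms by auto
  show ?thesis
    unfolding m11_def m12_def zL_def beta_def alpha_def c
    using eig_gen[OF ss hpq _ hL hbL hbL, of aL j] sp_pos by simp
qed

lemma eig_R: assumes "x \<ge> 1" shows "m11 x * zR j + m12 x = zR j * zR j"
proof -
  have c: "a1 x = aR" "a2 (x+1) = - aR" "b (x+1) = bR" "b x = bR" using coinR assms by auto
  show ?thesis
    unfolding m11_def m12_def zR_def beta_def alpha_def c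
    using eig_gen[OF ss hpq _ hR hbR hbR, of aR j] sp_pos by simp
qed

lemma eig_0: "m11 0 * zL j + m12 0 = zL j * zR j"
proof -
  have c: "a1 0 = aL" "a2 (0+1) = - aR" "b (0+1) = bR" "b 0 = bL" using coinL coinR by auto
  show ?thesis
    unfolding m11_def m12_def zL_def zR_def beta_def alpha_def c
    using eig_gen[OF ss hpq _ hL hbL hbR, of aR j] sp_pos by simp
qed


lemma eig_L': assumes "x \<le> -1" shows "m11 x + m12 x * inverse (zL j) = zL j"
proof -
  have "(m11 x * zL j + m12 x) * inverse (zL j) = zL j * zL j * inverse (zL j)"
    using eig_L[OF assms] by simp
  then show ?thesis using zL_nz[of j] by (simp add: field_simps)
qed

lemma Pmat_inv: "invertible (Pmat s p q aL bL)"
  unfolding invertible_det_nz det_2 Pmat_def mat2_nth using zL_diff unfolding zL_def by simp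

context
  fixes \<Phi> :: "int \<Rightarrow> complex^2"
  assumes rec: "\<And>x. \<Phi> (x + 1) = Amat s p q a1 a2 b x *v \<Phi> x"
begin

definition "kv = matrix_inv (Pmat s p q aL bL) *v \<Phi> 0"

lemma rec1: "\<Phi> (x + 1) $ 1 = m11 x * \<Phi> x $ 1 + m12 x * \<Phi> x $ 2"
  using rec[of x] unfolding Amat_eq by (simp add: mat2_mult1)
lemma rec2: "\<Phi> (x + 1) $ 2 = \<Phi> x $ 1"
  using rec[of x] unfolding Amat_eq by (simp add: mat2_mult2)

lemma Phi0: "\<Phi> 0 $ 1 = zL 1 * kv $ 1 + zL 2 * kv $ 2" "\<Phi> 0 $ 2 = kv $ 1 + kv $ 2"
proof -
  have "Pmat s p q aL bL *v kv = \<Phi> 0"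
    unfolding kv_def matrix_vector_mul_assoc matrix_inv_right'[OF Pmat_inv] matrix_vector_mul_lid ..
  then show "\<Phi> 0 $ 1 = zL 1 * kv $ 1 + zL 2 * kv $ 2" "\<Phi> 0 $ 2 = kv $ 1 + kv $ 2"
    unfolding Pmat_def zL_def by (metis mat2_mult1 mat2_mult2 mult_1)+
qed

lemma left_sol:
  "\<Phi> (- int n) $ 1 = kv$1 * inverse (zL 1) ^ n * zL 1 + kv$2 * inverse (zL 2) ^ n * zL 2
   \<and> \<Phi> (- int n) $ 2 = kv$1 * inverse (zL 1) ^ n + kv$2 * inverse (zL 2) ^ n"
proof (induction n)
  case 0
  then show ?case using Phi0 by simp
next
  case (Suc n)
  define x where "x = - int (Suc n)"
  have x1: "x + 1 = - int n" unfolding x_def by simp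
  have xle: "x \<le> -1" unfolding x_def by simp
  define u1 where "u1 = inverse (zL 1) ^ n"
  define u2 where "u2 = inverse (zL 2) ^ n"
  have pw1: "inverse (zL 1) ^ Suc n * zL 1 = u1" "inverse (zL 1) ^ Suc n = u1 * inverse (zL 1)"
    unfolding u1_def using zL_nz[of 1] by (simp_all add: field_simps)
  have pw2: "inverse (zL 2) ^ Suc n * zL 2 = u2" "inverse (zL 2) ^ Suc n = u2 * inverse (zL 2)"
    unfolding u2_def using zL_nz[of 2] by (simp_all add: field_simps)
  have IH1: "\<Phi> (x+1) $ 1 = kv$1 * u1 * zL 1 + kv$2 * u2 * zL 2"
    and IH2: "\<Phi> (x+1) $ 2 = kv$1 * u1 + kv$2 * u2" using Suc.IH unfolding x1 u1_def u2_def by auto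
  have A: "\<Phi> x $ 1 = kv$1 * u1 + kv$2 * u2" using rec2[of x] IH2 by simp
  have "m12 x * \<Phi> x $ 2 = m12 x * (kv$1 * (u1 * inverse (zL 1)) + kv$2 * (u2 * inverse (zL 2)))"
  proof -
    have "m12 x * \<Phi> x $ 2 = \<Phi> (x+1) $ 1 - m11 x * \<Phi> x $ 1" using rec1[of x] by simp
    also have "\<dots> = kv$1 * u1 * (m11 x + m12 x * inverse (zL 1)) + kv$2 * u2 * (m11 x + m12 x * inverse (zL 2)) - m11 x * (kv$1 * u1 + kv$2 * u2)"
      unfolding IH1 A eig_L'[OF xle] ..
    also have "\<dots> = m12 x * (kv$1 * (u1 * inverse (zL 1)) + kv$2 * (u2 * inverse (zL 2)))"
      by (simp add: algebra_simps)
    finally show ?thesis .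
  qed
  then have B: "\<Phi> x $ 2 = kv$1 * (u1 * inverse (zL 1)) + kv$2 * (u2 * inverse (zL 2))"
    using m12_nz[of x] by simp
  have E1: "kv$1 * inverse (zL 1) ^ Suc n * zL 1 + kv$2 * inverse (zL 2) ^ Suc n * zL 2 = kv$1*u1 + kv$2*u2"
    using pw1(1) pw2(1) by (metis mult.assoc)
  have E2: "kv$1 * inverse (zL 1) ^ Suc n + kv$2 * inverse (zL 2) ^ Suc n
     = kv$1 * (u1 * inverse (zL 1)) + kv$2 * (u2 * inverse (zL 2))"
    by (simp only: pw1(2) pw2(2))
  show ?case unfolding x_def[symmetric] E1 E2 using A B by simp
qed

lemma right_sol:
  "\<Phi> (int n + 1) $ 1 = kv$1 * zL 1 * zR 1 ^ n * zR 1 + kv$2 * zL 2 * zR 2 ^ n * zR 2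
   \<and> \<Phi> (int n + 1) $ 2 = kv$1 * zL 1 * zR 1 ^ n + kv$2 * zL 2 * zR 2 ^ n"
proof (induction n)
  case 0
  have "\<Phi> (0 + 1) $ 1 = kv$1 * (m11 0 * zL 1 + m12 0) + kv$2 * (m11 0 * zL 2 + m12 0)"
    unfolding rec1 Phi0 by (simp add: algebra_simps)
  then have "\<Phi> 1 $ 1 = kv$1 * zL 1 * zR 1 + kv$2 * zL 2 * zR 2" unfolding eig_0 by (simp add: mult.assoc)
  moreover have "\<Phi> 1 $ 2 = kv$1 * zL 1 + kv$2 * zL 2" using rec2[of 0] Phi0 by (simp add: mult.commute)
  ultimately show ?case by simp
next
  case (Suc n)
  define x where "x = int n + 1"
  have x1: "x + 1 = int (Suc n) + 1" unfolding x_def by simp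
  have xge: "x \<ge> 1" unfolding x_def by simp
  define w1 where "w1 = kv$1 * zL 1 * zR 1 ^ n"
  define w2 where "w2 = kv$2 * zL 2 * zR 2 ^ n"
  have IH1: "\<Phi> x $ 1 = w1 * zR 1 + w2 * zR 2" and IH2: "\<Phi> x $ 2 = w1 + w2"
    using Suc.IH unfolding x_def w1_def w2_def by auto
  have "\<Phi> (x + 1) $ 1 = w1 * (m11 x * zR 1 + m12 x) + w2 * (m11 x * zR 2 + m12 x)"
    unfolding rec1 IH1 IH2 by (simp add: algebra_simps)
  then have C1: "\<Phi> (x + 1) $ 1 = w1 * zR 1 * zR 1 + w2 * zR 2 * zR 2"
    unfolding eig_R[OF xge] by (simp add: mult.assoc)
  have C2: "\<Phi> (x + 1) $ 2 = w1 * zR 1 + w2 * zR 2" using rec2[of x] IH1 by simp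
  show ?case using C1 C2 unfolding x1 w1_def w2_def by (simp add: algebra_simps)
qed

end

end

lemma ennreal_infsum_lt_top_iff:
  fixes f :: "'a \<Rightarrow> real"
  assumes nn: "\<And>x. f x \<ge> 0"
  shows "(\<Sum>\<^sub>\<infinity>x\<in>A. ennreal (f x)) < \<infinity> \<longleftrightarrow> f summable_on A"
proof
  assume S: "f summable_on A"
  have "\<And>F. finite F \<Longrightarrow> F \<subseteq> A \<Longrightarrow> sum (ennreal \<circ> f) F = ennreal (sum f F)"
    using nn by (simp add: sum_ennreal)
  then have "infsum (ennreal \<circ> f) A = ennreal (infsum f A)"
    by (rule infsum_comm_additive_general) (auto simp: S)
  then have "infsum (\<lambda>x. ennreal (f x)) A = ennreal (infsum f A)" by (simp add: comp_def)
  then show "(\<Sum>\<^sub>\<infinity>x\<in>A. ennreal (f x)) < \<infinity>" by simp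
next
  assume L: "(\<Sum>\<^sub>\<infinity>x\<in>A. ennreal (f x)) < \<infinity>"
  define X where "X = (\<Sum>\<^sub>\<infinity>x\<in>A. ennreal (f x))"
  have XS: "X = (SUP F\<in>{F. finite F \<and> F\<subseteq>A}. sum (\<lambda>x. ennreal (f x)) F)"
    unfolding X_def by (rule nonneg_infsum_complete) simp
  show "f summable_on A"
  proof (rule nonneg_bdd_above_summable_on)
    show "\<And>x. x \<in> A \<Longrightarrow> 0 \<le> f x" using nn by simp
    show "bdd_above (sum f ` {F. F \<subseteq> A \<and> finite F})"
    proof (rule bdd_aboveI2)
      fix F assume F: "F \<in> {F. F \<subseteq> A \<and> finite F}"
      have "ennreal (sum f F) = sum (\<lambda>x. ennreal (f x)) F"
        using nn by (simp add: sum_ennreal)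
      also have "\<dots> \<le> X"
        unfolding XS by (rule SUP_upper) (use F in simp)
      finally have le: "ennreal (sum f F) \<le> X" .
      have "X \<noteq> \<infinity>" using L unfolding X_def by simp
      then have "sum f F \<le> enn2real X" using le
        by (cases X rule: ennreal_cases) auto
      then show "sum f F \<le> enn2real X" .
    qed
  qed
qed

lemma int_split_summable:
  fixes f :: "int \<Rightarrow> real"
  assumes nn: "\<And>x. f x \<ge> 0"
  shows "f summable_on UNIV \<longleftrightarrow> summable (\<lambda>n. f (- int n)) \<and> summable (\<lambda>n. f (int n + 1))"
proof -
  define h1 where "h1 = (\<lambda>n::nat. - int n)"
  define h2 where "h2 = (\<lambda>n::nat. int n + 1)"
  have U: "UNIV = range h1 \<union> range h2"
  proof (rule set_eqI)
    fix x :: int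
    show "x \<in> UNIV \<longleftrightarrow> x \<in> range h1 \<union> range h2"
    proof (cases "x \<le> 0")
      case True then have "x = h1 (nat (-x))" unfolding h1_def by simp
      then show ?thesis by auto
    next
      case False then have "x = h2 (nat (x - 1))" unfolding h2_def by simp
      then show ?thesis by auto
    qed
  qed
  have D: "range h1 \<inter> range h2 = {}"
  proof -
    have "\<forall>x\<in>range h1. x \<le> 0" "\<forall>x\<in>range h2. x \<ge> 1" unfolding h1_def h2_def by auto
    then show ?thesis unfolding disjoint_iff by (meson dual_order.trans not_one_le_zero)
  qed
  have i1: "inj h1" unfolding h1_def by (auto intro: injI)
  have i2: "inj h2" unfolding h2_def by (auto intro: injI)
  have e1: "f summable_on range h1 \<longleftrightarrow> summable (\<lambda>n. f (- int n))"
    using summable_on_reindex[OF i1, of f] summable_on_UNIV_nonneg_real_iff[of "f \<circ> h1"] nn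
    unfolding h1_def by (simp add: comp_def)
  have e2: "f summable_on range h2 \<longleftrightarrow> summable (\<lambda>n. f (int n + 1))"
    using summable_on_reindex[OF i2, of f] summable_on_UNIV_nonneg_real_iff[of "f \<circ> h2"] nn
    unfolding h2_def by (simp add: comp_def)
  show ?thesis
  proof
    assume "f summable_on UNIV"
    then have "f summable_on range h1" "f summable_on range h2"
      by (auto intro: summable_on_subset_banach)
    then show "summable (\<lambda>n. f (- int n)) \<and> summable (\<lambda>n. f (int n + 1))" using e1 e2 by simp
  next
    assume "summable (\<lambda>n. f (- int n)) \<and> summable (\<lambda>n. f (int n + 1))"
    then have "f summable_on (range h1 \<union> range h2)" using e1 e2 D summable_on_Un_disjoint by blast
    then show "f summable_on UNIV" using U by simp
  qed
qed

lemma summable_compare3: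
  fixes f g1 g2 :: "nat \<Rightarrow> real"
  assumes nn: "\<And>n. f n \<ge> 0" "\<And>n. g1 n \<ge> 0" "\<And>n. g2 n \<ge> 0"
    and b1: "\<And>n. g1 n \<le> C * f n" and b2: "\<And>n. g2 n \<le> C * f n"
    and b3: "\<And>n. f n \<le> C * (g1 n + g2 n)"
  shows "summable f \<longleftrightarrow> summable g1 \<and> summable g2"
proof
  assume "summable f"
  then have "summable (\<lambda>n. C * f n)" by (rule summable_mult)
  then have S': "summable (\<lambda>n. C * f n)" .
  have "summable g1" by (rule summable_comparison_test'[OF S', where N=0]) (use b1 nn in auto)
  moreover have "summable g2" by (rule summable_comparison_test'[OF S', where N=0]) (use b2 nn in auto)
  ultimately show "summable g1 \<and> summable g2" ..
next
  assume "summable g1 \<and> summable g2"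
  then have "summable (\<lambda>n. C * (g1 n + g2 n))" by (intro summable_mult summable_add) auto
  then show "summable f" by (rule summable_comparison_test'[where N=0]) (use b3 nn in auto)
qed

lemma summable_geom_c:
  fixes c r :: real
  assumes "c \<ge> 0" "r \<ge> 0"
  shows "summable (\<lambda>n. c * r ^ n) \<longleftrightarrow> c = 0 \<or> r < 1"
  using assms by (simp add: summable_cmult_iff summable_geometric_iff)

lemma sq_le2: "(x + y)\<^sup>2 \<le> 2 * (x\<^sup>2 + y\<^sup>2)" for x y :: real
  by (smt (verit) power2_sum sum_squares_bound)

lemma pt_bounds:
  fixes z1 z2 :: complex
  assumes d: "z1 \<noteq> z2"
  shows "\<exists>C>0. \<forall>a c. (cmod a)\<^sup>2 \<le> C * ((cmod (a * z1 + c * z2))\<^sup>2 + (cmod (a + c))\<^sup>2)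
          \<and> (cmod c)\<^sup>2 \<le> C * ((cmod (a * z1 + c * z2))\<^sup>2 + (cmod (a + c))\<^sup>2)
          \<and> (cmod (a * z1 + c * z2))\<^sup>2 + (cmod (a + c))\<^sup>2 \<le> C * ((cmod a)\<^sup>2 + (cmod c)\<^sup>2)"
proof -
  define m where "m = (cmod (z1 - z2))\<^sup>2"
  have m0: "m > 0" unfolding m_def using d by simp
  define C where "C = 2 * (1 + (cmod z1)\<^sup>2 + (cmod z2)\<^sup>2) * (1 + 1 / m)"
  have C0: "C > 0" unfolding C_def using m0 by (simp add: add_pos_nonneg)
  have "\<forall>a c. (cmod a)\<^sup>2 \<le> C * ((cmod (a * z1 + c * z2))\<^sup>2 + (cmod (a + c))\<^sup>2)
          \<and> (cmod c)\<^sup>2 \<le> C * ((cmod (a * z1 + c * z2))\<^sup>2 + (cmod (a + c))\<^sup>2)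
          \<and> (cmod (a * z1 + c * z2))\<^sup>2 + (cmod (a + c))\<^sup>2 \<le> C * ((cmod a)\<^sup>2 + (cmod c)\<^sup>2)"
  proof (intro allI conjI)
    fix a c :: complex
    define X where "X = a * z1 + c * z2"
    define Y where "Y = a + c"
    define T where "T = (cmod X)\<^sup>2 + (cmod Y)\<^sup>2"
    have T0: "T \<ge> 0" unfolding T_def by simp
    have K: "2 * (1 + (cmod z1)\<^sup>2 + (cmod z2)\<^sup>2) / m \<le> C"
      unfolding C_def using m0 by (simp add: field_simps)
    have "a * (z1 - z2) = X - z2 * Y" unfolding X_def Y_def by (simp add: algebra_simps)
    then have "cmod a * cmod (z1 - z2) \<le> cmod X + cmod z2 * cmod Y"
      by (metis norm_mult norm_triangle_ineq4 mult.commute)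
    then have "(cmod a)\<^sup>2 * m \<le> (cmod X + cmod z2 * cmod Y)\<^sup>2"
      unfolding m_def by (metis power_mono norm_ge_zero zero_le_mult_iff power_mult_distrib)
    also have "\<dots> \<le> 2 * ((cmod X)\<^sup>2 + (cmod z2)\<^sup>2 * (cmod Y)\<^sup>2)" using sq_le2[of "cmod X" "cmod z2 * cmod Y"] by (simp add: power_mult_distrib)
    also have "\<dots> \<le> 2 * (1 + (cmod z1)\<^sup>2 + (cmod z2)\<^sup>2) * T"
    proof -
      define K where "K = 1 + (cmod z1)\<^sup>2 + (cmod z2)\<^sup>2"
      have K1: "1 \<le> K" "(cmod z2)\<^sup>2 \<le> K" unfolding K_def by simp_all
      have "(cmod X)\<^sup>2 \<le> K * (cmod X)\<^sup>2" using K1 mult_right_mono[of 1 K "(cmod X)\<^sup>2"] by simp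
      moreover have "(cmod z2)\<^sup>2 * (cmod Y)\<^sup>2 \<le> K * (cmod Y)\<^sup>2" using K1 by (simp add: mult_right_mono)
      ultimately have "(cmod X)\<^sup>2 + (cmod z2)\<^sup>2 * (cmod Y)\<^sup>2 \<le> K * T" unfolding T_def by (simp add: distrib_left)
      then show ?thesis unfolding K_def[symmetric] by simp
    qed
    finally have "(cmod a)\<^sup>2 \<le> 2 * (1 + (cmod z1)\<^sup>2 + (cmod z2)\<^sup>2) / m * T"
      using m0 by (simp add: field_simps)
    also have "\<dots> \<le> C * T" using K T0 by (rule mult_right_mono)
    finally show "(cmod a)\<^sup>2 \<le> C * ((cmod (a * z1 + c * z2))\<^sup>2 + (cmod (a + c))\<^sup>2)"
      unfolding T_def X_def Y_def .
    have "c * (z1 - z2) = z1 * Y - X" unfolding X_def Y_def by (simp add: algebra_simps)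
    then have "cmod c * cmod (z1 - z2) \<le> cmod X + cmod z1 * cmod Y"
      by (metis norm_mult norm_triangle_ineq4 mult.commute add.commute norm_minus_commute)
    then have "(cmod c)\<^sup>2 * m \<le> (cmod X + cmod z1 * cmod Y)\<^sup>2"
      unfolding m_def by (metis power_mono norm_ge_zero zero_le_mult_iff power_mult_distrib)
    also have "\<dots> \<le> 2 * ((cmod X)\<^sup>2 + (cmod z1)\<^sup>2 * (cmod Y)\<^sup>2)" using sq_le2[of "cmod X" "cmod z1 * cmod Y"] by (simp add: power_mult_distrib)
    also have "\<dots> \<le> 2 * (1 + (cmod z1)\<^sup>2 + (cmod z2)\<^sup>2) * T"
    proof -
      define K where "K = 1 + (cmod z1)\<^sup>2 + (cmod z2)\<^sup>2"
      have K1: "1 \<le> K" "(cmod z1)\<^sup>2 \<le> K" unfolding K_def by simp_all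
      have "(cmod X)\<^sup>2 \<le> K * (cmod X)\<^sup>2" using K1 mult_right_mono[of 1 K "(cmod X)\<^sup>2"] by simp
      moreover have "(cmod z1)\<^sup>2 * (cmod Y)\<^sup>2 \<le> K * (cmod Y)\<^sup>2" using K1 by (simp add: mult_right_mono)
      ultimately have "(cmod X)\<^sup>2 + (cmod z1)\<^sup>2 * (cmod Y)\<^sup>2 \<le> K * T" unfolding T_def by (simp add: distrib_left)
      then show ?thesis unfolding K_def[symmetric] by simp
    qed
    finally have "(cmod c)\<^sup>2 \<le> 2 * (1 + (cmod z1)\<^sup>2 + (cmod z2)\<^sup>2) / m * T"
      using m0 by (simp add: field_simps)
    also have "\<dots> \<le> C * T" using K T0 by (rule mult_right_mono)
    finally show "(cmod c)\<^sup>2 \<le> C * ((cmod (a * z1 + c * z2))\<^sup>2 + (cmod (a + c))\<^sup>2)"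
      unfolding T_def X_def Y_def .
    have "cmod X \<le> cmod a * cmod z1 + cmod c * cmod z2" unfolding X_def
      by (metis norm_mult norm_triangle_ineq order_trans add_mono order_refl)
    then have "(cmod X)\<^sup>2 \<le> (cmod a * cmod z1 + cmod c * cmod z2)\<^sup>2"
      by (simp add: power_mono)
    also have "\<dots> \<le> 2 * ((cmod a)\<^sup>2 * (cmod z1)\<^sup>2 + (cmod c)\<^sup>2 * (cmod z2)\<^sup>2)"
      using sq_le2[of "cmod a * cmod z1" "cmod c * cmod z2"] by (simp add: power_mult_distrib)
    finally have h1: "(cmod X)\<^sup>2 \<le> 2 * ((cmod a)\<^sup>2 * (cmod z1)\<^sup>2 + (cmod c)\<^sup>2 * (cmod z2)\<^sup>2)" .
    have "(cmod Y)\<^sup>2 \<le> (cmod a + cmod c)\<^sup>2" unfolding Y_def by (simp add: power_mono norm_triangle_ineq)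
    also have "\<dots> \<le> 2 * ((cmod a)\<^sup>2 + (cmod c)\<^sup>2)" by (rule sq_le2)
    finally have h2: "(cmod Y)\<^sup>2 \<le> 2 * ((cmod a)\<^sup>2 + (cmod c)\<^sup>2)" .
    have "T \<le> 2 * (1 + (cmod z1)\<^sup>2 + (cmod z2)\<^sup>2) * ((cmod a)\<^sup>2 + (cmod c)\<^sup>2)"
    proof -
      define K where "K = 1 + (cmod z1)\<^sup>2 + (cmod z2)\<^sup>2"
      define P where "P = (cmod a)\<^sup>2 * (cmod z1)\<^sup>2 + (cmod c)\<^sup>2 * (cmod z2)\<^sup>2"
      define R where "R = (cmod a)\<^sup>2 + (cmod c)\<^sup>2"
      have hP: "P \<le> (cmod a)\<^sup>2 * (K - 1) + (cmod c)\<^sup>2 * (K - 1)"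
        unfolding K_def P_def by (intro add_mono mult_left_mono) auto
      have "T \<le> 2 * P + 2 * R" using add_mono[OF h1 h2] unfolding P_def R_def T_def .
      also have "\<dots> \<le> 2 * ((cmod a)\<^sup>2 * (K - 1) + (cmod c)\<^sup>2 * (K - 1)) + 2 * R" using hP by simp
      also have "\<dots> = 2 * K * ((cmod a)\<^sup>2 + (cmod c)\<^sup>2)" unfolding R_def by (simp add: algebra_simps)
      finally show ?thesis unfolding K_def .
    qed
    also have "\<dots> \<le> C * ((cmod a)\<^sup>2 + (cmod c)\<^sup>2)"
      unfolding C_def using m0 by (intro mult_right_mono) (auto simp: field_simps)
    finally show "(cmod (a * z1 + c * z2))\<^sup>2 + (cmod (a + c))\<^sup>2 \<le> C * ((cmod a)\<^sup>2 + (cmod c)\<^sup>2)"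
      unfolding T_def X_def Y_def .
  qed
  then show ?thesis using C0 by blast
qed

lemma cmod_pow_sq: "(cmod (k * w ^ n))\<^sup>2 = (cmod k)\<^sup>2 * ((cmod w)\<^sup>2) ^ n"
  by (simp add: norm_mult norm_power power_mult_distrib power_mult[symmetric] mult.commute)

lemma sq_lt1: "(x::real) \<ge> 0 \<Longrightarrow> x\<^sup>2 < 1 \<longleftrightarrow> x < 1"
  by (metis abs_of_nonneg abs_square_less_1)

lemma stmt_side:
  fixes r1 r2 :: real
  assumes "r1 \<ge> 0" "r2 \<ge> 0"
  shows "(\<Sum>\<^sub>\<infinity>n\<in>{1::nat..}. ennreal (r1 ^ (2 * n) + r2 ^ (2 * n))) < \<infinity> \<longleftrightarrow> r1 < 1 \<and> r2 < 1"
proof -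
  have R: "{1::nat..} = range Suc"
  proof (rule set_eqI)
    fix n :: nat show "n \<in> {1..} \<longleftrightarrow> n \<in> range Suc" by (cases n) auto
  qed
  define f where "f = (\<lambda>n::nat. r1 ^ (2 * n) + r2 ^ (2 * n))"
  have nn: "\<And>n. f n \<ge> 0" unfolding f_def using assms by simp
  have "(\<Sum>\<^sub>\<infinity>n\<in>{1::nat..}. ennreal (r1 ^ (2 * n) + r2 ^ (2 * n))) < \<infinity> \<longleftrightarrow> f summable_on {1..}"
    using ennreal_infsum_lt_top_iff[OF nn] unfolding f_def by simp
  also note R
  also have "f summable_on range Suc \<longleftrightarrow> summable (\<lambda>n. f (Suc n))"
    using summable_on_reindex[of Suc UNIV f] summable_on_UNIV_nonneg_real_iff[of "f \<circ> Suc"] nn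
    by (simp add: comp_def)
  also have "\<dots> \<longleftrightarrow> summable (\<lambda>n. r1\<^sup>2 * (r1\<^sup>2) ^ n) \<and> summable (\<lambda>n. r2\<^sup>2 * (r2\<^sup>2) ^ n)"
  proof (rule summable_compare3[where C=1])
    have e: "\<And>r::real. r ^ (2 * Suc n) = r\<^sup>2 * (r\<^sup>2) ^ n" for n
      by (simp add: power_mult[symmetric] power_add[symmetric])
    show "\<And>n. f (Suc n) \<le> 1 * (r1\<^sup>2 * (r1\<^sup>2) ^ n + r2\<^sup>2 * (r2\<^sup>2) ^ n)"
      unfolding f_def e by simp
    show "\<And>n. r1\<^sup>2 * (r1\<^sup>2) ^ n \<le> 1 * f (Suc n)"
      unfolding f_def e using assms by simp
    show "\<And>n. r2\<^sup>2 * (r2\<^sup>2) ^ n \<le> 1 * f (Suc n)"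
      unfolding f_def e using assms by simp
  qed (use nn in auto)
  also have "\<dots> \<longleftrightarrow> r1 < 1 \<and> r2 < 1"
    using summable_geom_c[of "r1\<^sup>2" "r1\<^sup>2"] summable_geom_c[of "r2\<^sup>2" "r2\<^sup>2"] sq_lt1 assms by auto
  finally show ?thesis unfolding R .
qed

context sq begin

context
  fixes \<Phi> :: "int \<Rightarrow> complex^2"
  assumes rec: "\<And>x. \<Phi> (x + 1) = Amat s p q a1 a2 b x *v \<Phi> x"
begin

lemma l2_left:
  "summable (\<lambda>n. (norm (\<Phi> (- int n)))\<^sup>2) \<longleftrightarrow>
    (kv \<Phi> $ 1 = 0 \<or> cmod (inverse (zL 1)) < 1) \<and> (kv \<Phi> $ 2 = 0 \<or> cmod (inverse (zL 2)) < 1)"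
proof -
  obtain C where C: "C > 0" and CC: "\<And>a c. (cmod a)\<^sup>2 \<le> C * ((cmod (a * zL 1 + c * zL 2))\<^sup>2 + (cmod (a + c))\<^sup>2)
          \<and> (cmod c)\<^sup>2 \<le> C * ((cmod (a * zL 1 + c * zL 2))\<^sup>2 + (cmod (a + c))\<^sup>2)
          \<and> (cmod (a * zL 1 + c * zL 2))\<^sup>2 + (cmod (a + c))\<^sup>2 \<le> C * ((cmod a)\<^sup>2 + (cmod c)\<^sup>2)"
    using pt_bounds[OF zL_diff] by blast
  define A where "A n = kv \<Phi> $ 1 * inverse (zL 1) ^ n" for n
  define B where "B n = kv \<Phi> $ 2 * inverse (zL 2) ^ n" for n
  have N: "(norm (\<Phi> (- int n)))\<^sup>2 = (cmod (A n * zL 1 + B n * zL 2))\<^sup>2 + (cmod (A n + B n))\<^sup>2" for n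
    unfolding norm2_sq using left_sol[OF rec, of n] unfolding A_def B_def by simp
  have "summable (\<lambda>n. (norm (\<Phi> (- int n)))\<^sup>2) \<longleftrightarrow> summable (\<lambda>n. (cmod (A n))\<^sup>2) \<and> summable (\<lambda>n. (cmod (B n))\<^sup>2)"
    by (rule summable_compare3[where C=C]) (use CC N in auto)
  also have "\<dots> \<longleftrightarrow> (kv \<Phi> $ 1 = 0 \<or> cmod (inverse (zL 1)) < 1) \<and> (kv \<Phi> $ 2 = 0 \<or> cmod (inverse (zL 2)) < 1)"
    unfolding A_def B_def cmod_pow_sq
    by (simp add: summable_geom_c sq_lt1)
  finally show ?thesis .
qed

lemma l2_right:
  "summable (\<lambda>n. (norm (\<Phi> (int n + 1)))\<^sup>2) \<longleftrightarrow>
    (kv \<Phi> $ 1 = 0 \<or> cmod (zR 1) < 1) \<and> (kv \<Phi> $ 2 = 0 \<or> cmod (zR 2) < 1)"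
proof -
  obtain C where C: "C > 0" and CC: "\<And>a c. (cmod a)\<^sup>2 \<le> C * ((cmod (a * zR 1 + c * zR 2))\<^sup>2 + (cmod (a + c))\<^sup>2)
          \<and> (cmod c)\<^sup>2 \<le> C * ((cmod (a * zR 1 + c * zR 2))\<^sup>2 + (cmod (a + c))\<^sup>2)
          \<and> (cmod (a * zR 1 + c * zR 2))\<^sup>2 + (cmod (a + c))\<^sup>2 \<le> C * ((cmod a)\<^sup>2 + (cmod c)\<^sup>2)"
    using pt_bounds[OF zR_diff] by blast
  define A where "A n = (kv \<Phi> $ 1 * zL 1) * zR 1 ^ n" for n
  define B where "B n = (kv \<Phi> $ 2 * zL 2) * zR 2 ^ n" for n
  have N: "(norm (\<Phi> (int n + 1)))\<^sup>2 = (cmod (A n * zR 1 + B n * zR 2))\<^sup>2 + (cmod (A n + B n))\<^sup>2" for n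
    unfolding norm2_sq using right_sol[OF rec, of n] unfolding A_def B_def by simp
  have "summable (\<lambda>n. (norm (\<Phi> (int n + 1)))\<^sup>2) \<longleftrightarrow> summable (\<lambda>n. (cmod (A n))\<^sup>2) \<and> summable (\<lambda>n. (cmod (B n))\<^sup>2)"
    by (rule summable_compare3[where C=C]) (use CC N in auto)
  also have "\<dots> \<longleftrightarrow> (kv \<Phi> $ 1 = 0 \<or> cmod (zR 1) < 1) \<and> (kv \<Phi> $ 2 = 0 \<or> cmod (zR 2) < 1)"
    unfolding A_def B_def cmod_pow_sq
    using zL_nz[of 1] zL_nz[of 2] by (simp add: summable_geom_c sq_lt1)
  finally show ?thesis .
qed

lemma l2_iff:
  "(\<lambda>x. (norm (\<Phi> x))\<^sup>2) summable_on UNIV \<longleftrightarrow>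
    (\<forall>j\<in>{1,2::nat}. kv \<Phi> $ of_nat j = 0 \<or> (inverse (cmod (zL j)) < 1 \<and> cmod (zR j) < 1))"
  using int_split_summable[of "\<lambda>x. (norm (\<Phi> x))\<^sup>2"] l2_left l2_right
  by (auto simp: norm_inverse)

end
end

lemma core_ineq:
  fixes P A :: real
  assumes "\<bar>P\<bar> < 1" "\<bar>A\<bar> < 1"
  shows "(1 - P\<^sup>2) * (-1 + A)\<^sup>2 < (1 + P)\<^sup>2 * (1 - A\<^sup>2) \<longleftrightarrow> -P < A"
    and "(1 - P\<^sup>2) * (-1 + A)\<^sup>2 > (1 + P)\<^sup>2 * (1 - A\<^sup>2) \<longleftrightarrow> A < -P"
proof -
  define X where "X = (1 + P) * (1 - A)"
  have id: "(1 - P\<^sup>2) * (-1 + A)\<^sup>2 - (1 + P)\<^sup>2 * (1 - A\<^sup>2) = - 2 * X * (P + A)"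
    unfolding X_def by (simp add: power2_eq_square algebra_simps)
  have X: "X > 0" unfolding X_def using assms by simp
  show "(1 - P\<^sup>2) * (-1 + A)\<^sup>2 < (1 + P)\<^sup>2 * (1 - A\<^sup>2) \<longleftrightarrow> -P < A"
  proof -
    have "(1 - P\<^sup>2) * (-1 + A)\<^sup>2 < (1 + P)\<^sup>2 * (1 - A\<^sup>2) \<longleftrightarrow> - 2 * X * (P + A) < 0"
      using id by linarith
    also have "\<dots> \<longleftrightarrow> 0 < (P + A)" using X by (simp add: mult_less_0_iff zero_less_mult_iff)
    finally show ?thesis by linarith
  qed
  show "(1 - P\<^sup>2) * (-1 + A)\<^sup>2 > (1 + P)\<^sup>2 * (1 - A\<^sup>2) \<longleftrightarrow> A < -P"
  proof -
    have "(1 - P\<^sup>2) * (-1 + A)\<^sup>2 > (1 + P)\<^sup>2 * (1 - A\<^sup>2) \<longleftrightarrow> - 2 * X * (P + A) > 0"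
      using id by linarith
    also have "\<dots> \<longleftrightarrow> (P + A) < 0" using X by (simp add: mult_less_0_iff zero_less_mult_iff)
    finally show ?thesis by linarith
  qed
qed

lemma zval_sq:
  fixes s p a :: real and q b :: complex and j :: nat
  assumes hs: "s = 1 \<or> s = -1" and hpq: "p\<^sup>2 + (cmod q)\<^sup>2 = 1" and hq: "q \<noteq> 0"
    and ha: "a\<^sup>2 + (cmod b)\<^sup>2 = 1" and hb: "b \<noteq> 0"
  defines "P \<equiv> s * p" and "A \<equiv> (- s * (-1)^j) * a"
  shows "(cmod (zval s j p q a b))\<^sup>2 * ((1 + P)\<^sup>2 * (1 - A\<^sup>2)) = (1 - P\<^sup>2) * (-1 + A)\<^sup>2"
proof -
  have ss: "s\<^sup>2 = 1" using hs by auto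
  have jj: "((-1::real)^j)\<^sup>2 = 1" by (simp flip: power_mult power_mult_distrib)
  have P2: "P\<^sup>2 = p\<^sup>2" unfolding P_def using ss by (simp add: power_mult_distrib)
  have A2: "A\<^sup>2 = a\<^sup>2" unfolding A_def using ss jj by (simp add: power_mult_distrib)
  have u2: "((-1)^j + s * a)\<^sup>2 = (-1 + A)\<^sup>2"
  proof -
    have "(-1)^j + s * a = (-1)^j * (1 + s * (-1)^j * a)"
      using jj by (simp add: algebra_simps power2_eq_square)
    then have "((-1)^j + s * a)\<^sup>2 = (1 + s * (-1)^j * a)\<^sup>2" using jj by (simp add: power_mult_distrib)
    also have "\<dots> = (-1 + A)\<^sup>2" unfolding A_def by (simp add: power2_eq_square algebra_simps)
    finally show ?thesis .
  qed
  have sp: "1 + s * p \<noteq> 0"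
  proof -
    have "p\<^sup>2 < 1" using hpq hq by (smt (verit) zero_less_norm_iff zero_less_power)
    then have "\<bar>p\<bar> < 1" by (simp add: abs_square_less_1)
    then show ?thesis using hs by auto
  qed
  have n: "cmod (zval s j p q a b) = cmod q * \<bar>(-1)^j + s * a\<bar> / (\<bar>1 + s * p\<bar> * cmod b)"
    unfolding zval_def by (simp add: norm_mult norm_divide del: of_real_add of_real_mult of_real_power)
  have "(cmod (zval s j p q a b))\<^sup>2 = (cmod q)\<^sup>2 * ((-1)^j + s * a)\<^sup>2 / ((1 + s * p)\<^sup>2 * (cmod b)\<^sup>2)"
    unfolding n by (simp add: power_divide power_mult_distrib)
  also have "\<dots> = (1 - P\<^sup>2) * (-1 + A)\<^sup>2 / ((1 + P)\<^sup>2 * (1 - A\<^sup>2))"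
  proof -
    have q2: "(cmod q)\<^sup>2 = 1 - p\<^sup>2" and b2: "(cmod b)\<^sup>2 = 1 - a\<^sup>2" using hpq ha by linarith+
    show ?thesis unfolding u2 P2 A2 q2 b2 unfolding P_def by simp
  qed
  finally have "(cmod (zval s j p q a b))\<^sup>2 = (1 - P\<^sup>2) * (-1 + A)\<^sup>2 / ((1 + P)\<^sup>2 * (1 - A\<^sup>2))" .
  moreover have "(1 + P)\<^sup>2 * (1 - A\<^sup>2) \<noteq> 0"
  proof -
    have "(cmod b)\<^sup>2 > 0" using hb by simp
    then have "1 - A\<^sup>2 > 0" using A2 ha by linarith
    moreover have "1 + P \<noteq> 0" using sp unfolding P_def .
    ultimately show ?thesis by simp
  qed
  ultimately show ?thesis by simp
qed

lemma sq_gt1: "(x::real) \<ge> 0 \<Longrightarrow> 1 < x\<^sup>2 \<longleftrightarrow> 1 < x"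
  by (metis abs_of_nonneg abs_square_le_1 not_less)

lemma zval_cond:
  fixes s p a :: real and q b :: complex and j :: nat
  assumes hs: "s = 1 \<or> s = -1" and hpq: "p\<^sup>2 + (cmod q)\<^sup>2 = 1" and hq: "q \<noteq> 0"
    and ha: "a\<^sup>2 + (cmod b)\<^sup>2 = 1" and hb: "b \<noteq> 0"
  shows "cmod (zval s j p q a b) < 1 \<longleftrightarrow> - (s * p) < (- s * (-1)^j) * a"
    and "inverse (cmod (zval s j p q a b)) < 1 \<longleftrightarrow> (- s * (-1)^j) * a < - (s * p)"
proof -
  define P where "P = s * p"
  define A where "A = (- s * (-1)^j) * a"
  have ss: "s\<^sup>2 = 1" using hs by auto
  have jj: "((-1::real)^j)\<^sup>2 = 1" by (simp flip: power_mult power_mult_distrib)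
  have "p\<^sup>2 < 1" using hpq hq by (smt (verit) zero_less_norm_iff zero_less_power)
  then have hP: "\<bar>P\<bar> < 1" unfolding P_def using hs by (auto simp add: abs_square_less_1)
  have "a\<^sup>2 < 1" using ha hb by (smt (verit) zero_less_norm_iff zero_less_power)
  moreover have "A\<^sup>2 = a\<^sup>2" unfolding A_def using ss jj by (simp add: power_mult_distrib)
  ultimately have "A\<^sup>2 < 1" by simp
  then have hA: "\<bar>A\<bar> < 1" by (simp add: abs_square_less_1)
  have D: "(1 + P)\<^sup>2 * (1 - A\<^sup>2) > 0"
  proof -
    have "1 + P > 0" using hP by simp
    moreover have "1 - A\<^sup>2 > 0" using \<open>A\<^sup>2 < 1\<close> by simp
    ultimately show ?thesis by simp
  qed
  have E: "(cmod (zval s j p q a b))\<^sup>2 * ((1 + P)\<^sup>2 * (1 - A\<^sup>2)) = (1 - P\<^sup>2) * (-1 + A)\<^sup>2"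
    using zval_sq[OF assms] unfolding P_def A_def by simp
  define r where "r = (cmod (zval s j p q a b))\<^sup>2"
  have "cmod (zval s j p q a b) < 1 \<longleftrightarrow> r < 1" unfolding r_def by (simp add: sq_lt1)
  also have "\<dots> \<longleftrightarrow> r * ((1 + P)\<^sup>2 * (1 - A\<^sup>2)) < 1 * ((1 + P)\<^sup>2 * (1 - A\<^sup>2))"
    using mult_less_cancel_right_pos[OF D, of r 1] by simp
  also have "\<dots> \<longleftrightarrow> -P < A" unfolding r_def E using core_ineq(1)[OF hP hA] by simp
  finally show "cmod (zval s j p q a b) < 1 \<longleftrightarrow> - (s * p) < (- s * (-1)^j) * a"
    unfolding P_def A_def .
  have nz: "zval s j p q a b \<noteq> 0"
    using zval_nz[OF hq _ hb hs \<open>a\<^sup>2 < 1\<close>] hP unfolding P_def by auto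
  have "inverse (cmod (zval s j p q a b)) < 1 \<longleftrightarrow> 1 < cmod (zval s j p q a b)"
    using nz by (simp add: inverse_less_1_iff)
  also have "\<dots> \<longleftrightarrow> 1 < r" unfolding r_def by (simp add: sq_gt1)
  also have "\<dots> \<longleftrightarrow> 1 * ((1 + P)\<^sup>2 * (1 - A\<^sup>2)) < r * ((1 + P)\<^sup>2 * (1 - A\<^sup>2))"
    using mult_less_cancel_right_pos[OF D, of 1 r] by simp
  also have "\<dots> \<longleftrightarrow> A < -P" unfolding r_def E using core_ineq(2)[OF hP hA] by simp
  finally show "inverse (cmod (zval s j p q a b)) < 1 \<longleftrightarrow> (- s * (-1)^j) * a < - (s * p)"
    unfolding P_def A_def .
qed

lemma mod_cscale: "module cscale"
  by unfold_locales (simp_all add: cscale_def fun_eq_iff algebra_simps)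

lemma cdim_of_line:
  assumes "V \<subseteq> range (\<lambda>c. cscale c F)"
  shows "cdim_le_1 V"
  unfolding cdim_le_1_def
proof (intro allI impI)
  fix B assume BV: "B \<subseteq> V" and ind: "\<not> module.dependent cscale B"
  have dep: "\<And>t u. finite t \<Longrightarrow> t \<subseteq> B \<Longrightarrow> (\<Sum>v\<in>t. cscale (u v) v) = 0 \<Longrightarrow> (\<exists>v\<in>t. u v \<noteq> 0) \<Longrightarrow> False"
    using ind unfolding module.dependent_explicit[OF mod_cscale] by blast
  have z: "0 \<notin> B"
  proof
    assume "0 \<in> B"
    then show False by (intro dep[of "{0}" "\<lambda>_. 1"]) (auto simp: cscale_def)
  qed
  have one: "x = y" if xB: "x \<in> B" and yB: "y \<in> B" for x y
  proof (rule ccontr)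
    assume xy: "x \<noteq> y"
    obtain c1 where c1: "x = cscale c1 F" using xB BV assms by blast
    obtain c2 where c2: "y = cscale c2 F" using yB BV assms by blast
    have c20: "c2 \<noteq> 0"
    proof
      assume "c2 = 0"
      then have "y = 0" unfolding c2 cscale_def by (simp add: fun_eq_iff)
      then show False using z yB by simp
    qed
    define u where "u v = (if v = x then c2 else - c1)" for v
    have "(\<Sum>v\<in>{x, y}. cscale (u v) v) = cscale c2 x + cscale (- c1) y"
      using xy unfolding u_def by simp
    also have "\<dots> = 0" unfolding c1 c2 by (simp add: cscale_def fun_eq_iff)
    finally show False using dep[of "{x, y}" u] xB yB c20 unfolding u_def by auto
  qed
  show "finite B \<and> card B \<le> 1"
  proof (cases "B = {}")
    case True then show ?thesis by simp
  next
    case False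
    then obtain x where "x \<in> B" by blast
    then have "B = {x}" using one by blast
    then show ?thesis by simp
  qed
qed

context sq begin

definition "good j \<longleftrightarrow> inverse (cmod (zL j)) < 1 \<and> cmod (zR j) < 1"

lemma not_both: "\<not> (good 1 \<and> good 2)"
proof -
  have c: "\<And>j a b. a\<^sup>2 + (cmod b)\<^sup>2 = 1 \<Longrightarrow> b \<noteq> 0 \<Longrightarrow>
     (cmod (zval s j p q a b) < 1 \<longleftrightarrow> - (s * p) < (- s * (-1)^j) * a) \<and>
     (inverse (cmod (zval s j p q a b)) < 1 \<longleftrightarrow> (- s * (-1)^j) * a < - (s * p))"
    using zval_cond[OF hs hpq hq] by blast
  have g1: "good 1 \<longleftrightarrow> s * aL < - (s * p) \<and> - (s * p) < s * aR"
    using c[OF hL hbL, of 1] c[OF hR hbR, of 1] unfolding good_def zL_def zR_def by simp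
  have g2: "good 2 \<longleftrightarrow> - (s * aL) < - (s * p) \<and> - (s * p) < - (s * aR)"
    using c[OF hL hbL, of 2] c[OF hR hbR, of 2] unfolding good_def zL_def zR_def by simp
  show ?thesis unfolding g1 g2 by linarith
qed

lemma cnj_alpha: "cnj (alpha (- s) p q b x) = complex_of_real (1 - s * p) * exp (- \<i> * complex_of_real (Arg q)) * cnj (b x)"
  unfolding alpha_def by (simp add: exp_cnj)

lemma Q_rec:
  assumes "Qop s p q a1 a2 b \<psi> x = 0"
  shows "\<psi> (x + 1) = m11 x * \<psi> x + m12 x * \<psi> (x - 1)"
proof -
  have "alpha s p q b (x + 1) * \<psi> (x + 1) - cnj (alpha (- s) p q b x) * \<psi> (x - 1)
        + complex_of_real (s * beta q a1 a2 x) * \<psi> x = 0"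
    using assms unfolding Qop_def cnj_alpha unfolding alpha_def beta_def by (simp add: mult.assoc)
  then have E: "alpha s p q b (x + 1) * \<psi> (x + 1) = cnj (alpha (- s) p q b x) * \<psi> (x - 1)
        - complex_of_real (s * beta q a1 a2 x) * \<psi> x"
    by (simp add: algebra_simps)
  have "m11 x * \<psi> x + m12 x * \<psi> (x - 1)
      = (cnj (alpha (- s) p q b x) * \<psi> (x - 1) - complex_of_real (s * beta q a1 a2 x) * \<psi> x) / alpha s p q b (x + 1)"
    unfolding m11_def m12_def using alpha_nz(1)[of "x+1"] by (simp add: field_simps)
  also have "\<dots> = \<psi> (x + 1)" unfolding E[symmetric] using alpha_nz(1)[of "x+1"] by simp
  finally show ?thesis by simp
qed

definition "W j x = (if x \<le> 0 then inverse (zL j) ^ nat (- x) else zL j * zR j ^ nat (x - 1))"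

lemma ker_line: "\<exists>F. kerQ s p q a1 a2 b \<subseteq> range (\<lambda>c. cscale c F)"
proof -
  define F where "F = (if good 1 then (\<lambda>y. W 1 (y + 1)) else (\<lambda>y. W 2 (y + 1)))"
  have "kerQ s p q a1 a2 b \<subseteq> range (\<lambda>c. cscale c F)"
  proof
    fix \<psi> assume K: "\<psi> \<in> kerQ s p q a1 a2 b"
    then have l2: "(\<lambda>x. (cmod (\<psi> x))\<^sup>2) summable_on UNIV" and Q0: "\<And>x. Qop s p q a1 a2 b \<psi> x = 0"
      unfolding kerQ_def l2Z_def by auto
    define \<Phi> :: "int \<Rightarrow> complex^2" where "\<Phi> x = (\<chi> i. if i = 1 then \<psi> x else \<psi> (x - 1))" for x
    have P1: "\<Phi> x $ 1 = \<psi> x" and P2: "\<Phi> x $ 2 = \<psi> (x - 1)" for x unfolding \<Phi>_def by simp_all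
    have rec: "\<And>x. \<Phi> (x + 1) = Amat s p q a1 a2 b x *v \<Phi> x"
      unfolding vec2_eq Amat_eq mat2_mult1 mat2_mult2 P1 P2 using Q_rec[OF Q0] by simp
    have sh: "(\<lambda>x. (cmod (\<psi> (x - 1)))\<^sup>2) summable_on UNIV"
    proof -
      have inj: "inj (\<lambda>x::int. x - 1)" by (auto intro: injI)
      have sur: "range (\<lambda>x::int. x - 1) = UNIV" by (rule surjI[of _ "\<lambda>x. x + 1"]) simp
      show ?thesis using summable_on_reindex[OF inj, of "\<lambda>x. (cmod (\<psi> x))\<^sup>2"] l2 sur
        by (simp add: comp_def)
    qed
    have "(\<lambda>x. (norm (\<Phi> x))\<^sup>2) summable_on UNIV"
      unfolding norm2_sq P1 P2 using summable_on_add[OF l2 sh] by simp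
    then have kk: "(kv \<Phi> $ 1 = 0 \<or> good 1) \<and> (kv \<Phi> $ 2 = 0 \<or> good 2)"
      using l2_iff[OF rec] unfolding good_def by simp
    have rep: "\<Phi> x $ 2 = kv \<Phi> $ 1 * W 1 x + kv \<Phi> $ 2 * W 2 x" for x
    proof (cases "x \<le> 0")
      case True
      then have x: "x = - int (nat (- x))" by simp
      show ?thesis using left_sol[OF rec, of "nat (- x)"] True unfolding W_def
        by (subst x) (simp add: mult.assoc)
    next
      case False
      then have x: "x = int (nat (x - 1)) + 1" by simp
      show ?thesis using right_sol[OF rec, of "nat (x - 1)"] False unfolding W_def
        by (subst x) (simp add: mult.assoc)
    qed
    have psi: "\<psi> y = kv \<Phi> $ 1 * W 1 (y + 1) + kv \<Phi> $ 2 * W 2 (y + 1)" for y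
      using rep[of "y + 1"] unfolding P2 by simp
    show "\<psi> \<in> range (\<lambda>c. cscale c F)"
    proof (cases "good 1")
      case True
      then have "kv \<Phi> $ 2 = 0" using kk not_both by blast
      then have "\<psi> = cscale (kv \<Phi> $ 1) F" unfolding F_def cscale_def using True psi by (simp add: fun_eq_iff)
      then show ?thesis by blast
    next
      case False
      then have "kv \<Phi> $ 1 = 0" using kk by blast
      then have "\<psi> = cscale (kv \<Phi> $ 2) F" unfolding F_def cscale_def using False psi by (simp add: fun_eq_iff)
      then show ?thesis by blast
    qed
  qed
  then show ?thesis by blast
qed

end

theorem corollary4p13:
  fixes p :: real and q :: complex
    and aL aR :: real and bL bR :: complex
    and a1 a2 :: "int \<Rightarrow> real" and b :: "int \<Rightarrow> complex"
  assumes hq: "q \<noteq> 0" and hpq: "p\<^sup>2 + (cmod q)\<^sup>2 = 1"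
    and hL: "aL\<^sup>2 + (cmod bL)\<^sup>2 = 1" and hR: "aR\<^sup>2 + (cmod bR)\<^sup>2 = 1"
    and hbL: "bL \<noteq> 0" and hbR: "bR \<noteq> 0"
    and coinR: "\<And>x. x \<ge> 1 \<Longrightarrow> a1 x = aR \<and> a2 x = - aR \<and> b x = bR"
    and coinL: "\<And>x. x \<le> 0 \<Longrightarrow> a1 x = aL \<and> a2 x = - aL \<and> b x = bL"
  shows
    "(\<forall>s \<in> {1, -1::real}. \<forall>\<Phi> :: int \<Rightarrow> complex^2.
        (\<forall>x. \<Phi> (x + 1) = Amat s p q a1 a2 b x *v \<Phi> x) \<longrightarrow>
        ((\<Sum>\<^sub>\<infinity>x::int. ennreal ((norm (\<Phi> x))\<^sup>2)) < \<infinity> \<longleftrightarrow>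
          (\<forall>j \<in> {1, 2::nat}.
             ennreal ((cmod ((matrix_inv (Pmat s p q aL bL) *v \<Phi> 0) $ of_nat j))\<^sup>2)
             * (\<Sum>\<^sub>\<infinity>n \<in> {1::nat..}. ennreal (inverse (cmod (zval s j p q aL bL)) ^ (2 * n)
                                              + cmod (zval s j p q aR bR) ^ (2 * n)))
             < \<infinity>)))
     \<and> ((inverse (cmod (zval 1 1 p q aL bL)) < 1 \<and> cmod (zval 1 1 p q aR bR) < 1)
          \<longleftrightarrow> (aL < - p \<and> - p < aR))
     \<and> ((inverse (cmod (zval 1 2 p q aL bL)) < 1 \<and> cmod (zval 1 2 p q aR bR) < 1)
          \<longleftrightarrow> (aR < p \<and> p < aL))
     \<and> ((inverse (cmod (zval (-1) 1 p q aL bL)) < 1 \<and> cmod (zval (-1) 1 p q aR bR) < 1)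
          \<longleftrightarrow> (aR < - p \<and> - p < aL))
     \<and> ((inverse (cmod (zval (-1) 2 p q aL bL)) < 1 \<and> cmod (zval (-1) 2 p q aR bR) < 1)
          \<longleftrightarrow> (aL < p \<and> p < aR))
     \<and> (\<forall>s \<in> {1, -1::real}. cdim_le_1 (kerQ s p q a1 a2 b))"
proof -
  have L: "sq p q aL aR bL bR a1 a2 b s" if "s \<in> {1, -1::real}" for s
    using that by unfold_locales (use assms in auto)
  have P1: "(\<forall>s \<in> {1, -1::real}. \<forall>\<Phi> :: int \<Rightarrow> complex^2.
        (\<forall>x. \<Phi> (x + 1) = Amat s p q a1 a2 b x *v \<Phi> x) \<longrightarrow>
        ((\<Sum>\<^sub>\<infinity>x::int. ennreal ((norm (\<Phi> x))\<^sup>2)) < \<infinity> \<longleftrightarrow>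
          (\<forall>j \<in> {1, 2::nat}.
             ennreal ((cmod ((matrix_inv (Pmat s p q aL bL) *v \<Phi> 0) $ of_nat j))\<^sup>2)
             * (\<Sum>\<^sub>\<infinity>n \<in> {1::nat..}. ennreal (inverse (cmod (zval s j p q aL bL)) ^ (2 * n)
                                              + cmod (zval s j p q aR bR) ^ (2 * n)))
             < \<infinity>)))"
  proof (intro ballI allI impI)
    fix s :: real and \<Phi> :: "int \<Rightarrow> complex^2"
    assume s: "s \<in> {1, -1}" and rec: "\<forall>x. \<Phi> (x + 1) = Amat s p q a1 a2 b x *v \<Phi> x"
    interpret sq p q aL aR bL bR a1 a2 b s using L[OF s] .
    have rec': "\<And>x. \<Phi> (x + 1) = Amat s p q a1 a2 b x *v \<Phi> x" using rec by blast
    have kv: "kv \<Phi> = matrix_inv (Pmat s p q aL bL) *v \<Phi> 0" using kv_def[OF rec'] .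
    have "(\<Sum>\<^sub>\<infinity>x::int. ennreal ((norm (\<Phi> x))\<^sup>2)) < \<infinity> \<longleftrightarrow> (\<lambda>x. (norm (\<Phi> x))\<^sup>2) summable_on UNIV"
      by (rule ennreal_infsum_lt_top_iff) simp
    also have "\<dots> \<longleftrightarrow> (\<forall>j\<in>{1,2::nat}. kv \<Phi> $ of_nat j = 0 \<or> (inverse (cmod (zL j)) < 1 \<and> cmod (zR j) < 1))"
      by (rule l2_iff[OF rec'])
    also have "\<dots> \<longleftrightarrow> (\<forall>j \<in> {1, 2::nat}.
             ennreal ((cmod ((matrix_inv (Pmat s p q aL bL) *v \<Phi> 0) $ of_nat j))\<^sup>2)
             * (\<Sum>\<^sub>\<infinity>n \<in> {1::nat..}. ennreal (inverse (cmod (zval s j p q aL bL)) ^ (2 * n)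
                                              + cmod (zval s j p q aR bR) ^ (2 * n)))
             < \<infinity>)"
    proof (rule ball_cong[OF refl])
      fix j :: nat assume "j \<in> {1, 2}"
      define k where "k = kv \<Phi> $ of_nat j"
      define X where "X = (\<Sum>\<^sub>\<infinity>n \<in> {1::nat..}. ennreal (inverse (cmod (zval s j p q aL bL)) ^ (2 * n)
                                              + cmod (zval s j p q aR bR) ^ (2 * n)))"
      have X: "X < \<infinity> \<longleftrightarrow> inverse (cmod (zL j)) < 1 \<and> cmod (zR j) < 1"
        unfolding X_def zL_def zR_def by (rule stmt_side) simp_all
      have "ennreal ((cmod k)\<^sup>2) * X < \<infinity> \<longleftrightarrow> k = 0 \<or> X < \<infinity>"
      proof -
        have a1: "ennreal ((cmod k)\<^sup>2) < \<infinity>" by simp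
        have a2: "ennreal ((cmod k)\<^sup>2) = 0 \<longleftrightarrow> k = 0" by simp
        have a3: "X = 0 \<Longrightarrow> X < \<infinity>" by simp
        show ?thesis using a1 a2 a3 unfolding infinity_ennreal_def ennreal_mult_less_top by blast
      qed
      then show "(kv \<Phi> $ of_nat j = 0 \<or> (inverse (cmod (zL j)) < 1 \<and> cmod (zR j) < 1)) \<longleftrightarrow>
             ennreal ((cmod ((matrix_inv (Pmat s p q aL bL) *v \<Phi> 0) $ of_nat j))\<^sup>2)
             * (\<Sum>\<^sub>\<infinity>n \<in> {1::nat..}. ennreal (inverse (cmod (zval s j p q aL bL)) ^ (2 * n)
                                              + cmod (zval s j p q aR bR) ^ (2 * n))) < \<infinity>"
        unfolding kv[symmetric] unfolding X[symmetric] X_def[symmetric] k_def[symmetric] by simp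
    qed
    finally show "(\<Sum>\<^sub>\<infinity>x::int. ennreal ((norm (\<Phi> x))\<^sup>2)) < \<infinity> \<longleftrightarrow> (\<forall>j \<in> {1, 2::nat}.
             ennreal ((cmod ((matrix_inv (Pmat s p q aL bL) *v \<Phi> 0) $ of_nat j))\<^sup>2)
             * (\<Sum>\<^sub>\<infinity>n \<in> {1::nat..}. ennreal (inverse (cmod (zval s j p q aL bL)) ^ (2 * n)
                                              + cmod (zval s j p q aR bR) ^ (2 * n)))
             < \<infinity>)" .
  qed
  have s1: "(1::real) = 1 \<or> (1::real) = -1" and s2: "(-1::real) = 1 \<or> (-1::real) = -1" by simp_all
  note c11L = zval_cond[OF s1 hpq hq hL hbL, of 1] and c11R = zval_cond[OF s1 hpq hq hR hbR, of 1]
  note c12L = zval_cond[OF s1 hpq hq hL hbL, of 2] and c12R = zval_cond[OF s1 hpq hq hR hbR, of 2]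
  note c21L = zval_cond[OF s2 hpq hq hL hbL, of 1] and c21R = zval_cond[OF s2 hpq hq hR hbR, of 1]
  note c22L = zval_cond[OF s2 hpq hq hL hbL, of 2] and c22R = zval_cond[OF s2 hpq hq hR hbR, of 2]
  have P2: "(inverse (cmod (zval 1 1 p q aL bL)) < 1 \<and> cmod (zval 1 1 p q aR bR) < 1)
          \<longleftrightarrow> (aL < - p \<and> - p < aR)"
    using c11L c11R by simp
  have P3: "(inverse (cmod (zval 1 2 p q aL bL)) < 1 \<and> cmod (zval 1 2 p q aR bR) < 1)
          \<longleftrightarrow> (aR < p \<and> p < aL)"
    using c12L c12R by auto
  have P4: "(inverse (cmod (zval (-1) 1 p q aL bL)) < 1 \<and> cmod (zval (-1) 1 p q aR bR) < 1)
          \<longleftrightarrow> (aR < - p \<and> - p < aL)"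
    using c21L c21R by auto
  have P5: "(inverse (cmod (zval (-1) 2 p q aL bL)) < 1 \<and> cmod (zval (-1) 2 p q aR bR) < 1)
          \<longleftrightarrow> (aL < p \<and> p < aR)"
    using c22L c22R by auto
  have P6: "\<forall>s \<in> {1, -1::real}. cdim_le_1 (kerQ s p q a1 a2 b)"
  proof
    fix s :: real assume s: "s \<in> {1, -1}"
    interpret sq p q aL aR bL bR a1 a2 b s using L[OF s] .
    obtain F where "kerQ s p q a1 a2 b \<subseteq> range (\<lambda>c. cscale c F)" using ker_line by blast
    then show "cdim_le_1 (kerQ s p q a1 a2 b)" by (rule cdim_of_line)
  qed
  show ?thesis using P1 P2 P3 P4 P5 P6 by blast
qed

end
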